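(* Let $(\mathcal{A},E,\mathcal{B})$ be an operator-valued $C^*$-probability space and $\varphi$ a state on $\mathcal{A}$ with $\varphi=\varphi\circ E$. Let $B\in\mathcal{A}$ be a centered $\mathcal{B}$-valued Bernoulli element with variance map $\eta(b)=E[BbB]$. Then for every $n\in\mathbb{N}$, $\varphi(B^{2n})=\varphi(\eta(1)^n)$ and $\varphi(B^{2n+1})=0$. In particular, if $\mu_B$ and $\mu_{\eta(1)}$ denote the distributions of $B$ and of $\eta(1)$ with respect to $\varphi$, then $\mu_B$ is the unique symmetric probability measure on $\mathbb{R}$ whose push-forward under $t\mapsto t^2$ equals $\mu_{\eta(1)}$.
   Context: $(\mathcal{A},E,\mathcal{B})$: unital $C^*$-algebra, unital $C^*$-subalgebra $\mathcal{B}$, completely positive conditional expectation $E$. A centered $\mathcal{B}$-valued Bernoulli element with variance $\eta$ is $s=s^*\in\mathcal{A}$ with $E[b_0sb_1s\cdots sb_k]=b_0\eta(b_1)b_2\eta(b_3)\cdots\eta(b_{k-1})b_k$ for even $k$ and $0$ for odd $k$. *)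

theory Defs
  imports "HOL-Probability.Probability"
begin

class cstar_algebra = real_normed_algebra_1 + banach +
  fixes scaleC :: "complex \<Rightarrow> 'a \<Rightarrow> 'a"
    and cstar :: "'a \<Rightarrow> 'a"
  assumes scaleC_of_real: "scaleC (complex_of_real r) x = scaleR r x"
    and scaleC_add_left: "scaleC (a + b) x = scaleC a x + scaleC b x"
    and scaleC_add_right: "scaleC a (x + y) = scaleC a x + scaleC a y"
    and scaleC_scaleC: "scaleC a (scaleC b x) = scaleC (a * b) x"
    and scaleC_one: "scaleC 1 x = x"
    and scaleC_mult_left: "scaleC a (x * y) = scaleC a x * y"
    and scaleC_mult_right: "scaleC a (x * y) = x * scaleC a y"
    and norm_scaleC: "norm (scaleC a x) = cmod a * norm x"
    and cstar_cstar: "cstar (cstar x) = x"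
    and cstar_add: "cstar (x + y) = cstar x + cstar y"
    and cstar_mult: "cstar (x * y) = cstar y * cstar x"
    and cstar_scaleC: "cstar (scaleC a x) = scaleC (cnj a) (cstar x)"
    and cstar_identity: "norm (cstar x * x) = (norm x)\<^sup>2"

definition cpositive :: "'a::cstar_algebra \<Rightarrow> bool" where
  "cpositive x \<longleftrightarrow> (\<exists>y. x = cstar y * y)"

definition unital_cstar_subalgebra :: "'a::cstar_algebra set \<Rightarrow> bool" where
  "unital_cstar_subalgebra S \<longleftrightarrow>
     1 \<in> S \<and> closed S \<and>
     (\<forall>x\<in>S. \<forall>y\<in>S. x + y \<in> S \<and> x * y \<in> S) \<and>
     (\<forall>x\<in>S. cstar x \<in> S) \<and>
     (\<forall>c. \<forall>x\<in>S. scaleC c x \<in> S)"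

definition clinear_map :: "('a::cstar_algebra \<Rightarrow> 'b::cstar_algebra) \<Rightarrow> bool" where
  "clinear_map T \<longleftrightarrow> (\<forall>x y. T (x + y) = T x + T y) \<and> (\<forall>c x. T (scaleC c x) = scaleC c (T x))"

text \<open>Complete positivity: every amplification \<open>id_{M_n} \<otimes> T\<close> maps positive matrices
(i.e. matrices of the form \<open>Y* Y\<close> in \<open>M_n(A)\<close>) to positive matrices.
Matrices are functions \<open>nat \<Rightarrow> nat \<Rightarrow> 'a\<close> with indices \<open>< n\<close>.\<close>
definition completely_positive :: "('a::cstar_algebra \<Rightarrow> 'a) \<Rightarrow> bool" where
  "completely_positive T \<longleftrightarrow>
     (\<forall>(n::nat) (Y::nat \<Rightarrow> nat \<Rightarrow> 'a). \<exists>Z::nat \<Rightarrow> nat \<Rightarrow> 'a.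
        \<forall>i<n. \<forall>j<n. T (\<Sum>k<n. cstar (Y k i) * Y k j) = (\<Sum>k<n. cstar (Z k i) * Z k j))"

definition op_valued_cstar_prob_space :: "('a::cstar_algebra \<Rightarrow> 'a) \<Rightarrow> 'a set \<Rightarrow> bool" where
  "op_valued_cstar_prob_space E Bs \<longleftrightarrow>
     unital_cstar_subalgebra Bs \<and> clinear_map E \<and>
     (\<forall>x. E x \<in> Bs) \<and> (\<forall>b\<in>Bs. E b = b) \<and>
     (\<forall>b1\<in>Bs. \<forall>b2\<in>Bs. \<forall>x. E (b1 * x * b2) = b1 * E x * b2) \<and>
     completely_positive E"

definition cstate :: "('a::cstar_algebra \<Rightarrow> complex) \<Rightarrow> bool" where
  "cstate \<phi> \<longleftrightarrow>
     (\<forall>x y. \<phi> (x + y) = \<phi> x + \<phi> y) \<and> (\<forall>c x. \<phi> (scaleC c x) = c * \<phi> x) \<and>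
     (\<forall>y. \<phi> (cstar y * y) \<in> \<real> \<and> Re (\<phi> (cstar y * y)) \<ge> 0) \<and>
     \<phi> 1 = 1"

fun alt_word :: "'a::cstar_algebra \<Rightarrow> (nat \<Rightarrow> 'a) \<Rightarrow> nat \<Rightarrow> 'a" where
  "alt_word s b 0 = b 0"
| "alt_word s b (Suc k) = alt_word s b k * s * b (Suc k)"

fun bern_rhs :: "('a::cstar_algebra \<Rightarrow> 'a) \<Rightarrow> (nat \<Rightarrow> 'a) \<Rightarrow> nat \<Rightarrow> 'a" where
  "bern_rhs eta b 0 = b 0"
| "bern_rhs eta b (Suc 0) = 0"
| "bern_rhs eta b (Suc (Suc k)) = bern_rhs eta b k * eta (b (Suc k)) * b (Suc (Suc k))"

definition centered_bernoulli ::
    "('a::cstar_algebra \<Rightarrow> 'a) \<Rightarrow> 'a set \<Rightarrow> ('a \<Rightarrow> 'a) \<Rightarrow> 'a \<Rightarrow> bool" where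
  "centered_bernoulli E Bs eta s \<longleftrightarrow>
     cstar s = s \<and>
     (\<forall>k (b::nat \<Rightarrow> 'a). (\<forall>i\<le>k. b i \<in> Bs) \<longrightarrow>
        E (alt_word s b k) = (if even k then bern_rhs eta b k else 0))"

definition is_distribution :: "('a::cstar_algebra \<Rightarrow> complex) \<Rightarrow> 'a \<Rightarrow> real measure \<Rightarrow> bool" where
  "is_distribution \<phi> x \<mu> \<longleftrightarrow>
     prob_space \<mu> \<and> sets \<mu> = sets borel \<and>
     (\<exists>K. compact K \<and> emeasure \<mu> (UNIV - K) = 0) \<and>
     (\<forall>k::nat. integrable \<mu> (\<lambda>t. t ^ k) \<and>
        complex_of_real (\<integral>t. t ^ k \<partial>\<mu>) = \<phi> (x ^ k))"

definition symmetric_measure :: "real measure \<Rightarrow> bool" where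
  "symmetric_measure \<mu> \<longleftrightarrow> distr \<mu> borel uminus = \<mu>"

end

theory Submission
  imports Defs "HOL-Probability.Probability"
begin

lemma moment_unique:
  fixes M1 M2 :: "real measure"
  assumes A: "real_distribution M1" and B: "real_distribution M2"
   and bA: "AE x in M1. \<bar>x\<bar> \<le> R" and bB: "AE x in M2. \<bar>x\<bar> \<le> R"
   and eq: "\<And>k::nat. (\<integral>x. x^k \<partial>M1) = (\<integral>x. x^k \<partial>M2)"
  shows "M1 = M2"
proof -
  interpret A: real_distribution M1 by fact
  interpret B: real_distribution M2 by fact
  have pw: "\<bar>x\<bar> \<le> R \<Longrightarrow> \<bar>x\<bar>^k \<le> R^k" for x and k::nat
    by (rule power_mono) auto
  have intA: "integrable M1 (\<lambda>x. x^k)" for k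
    by (rule A.integrable_const_bound[where B="R^k"]) (use bA pw in \<open>auto elim!: eventually_mono simp: power_abs\<close>)
  have intB: "integrable M2 (\<lambda>x. x^k)" for k
    by (rule B.integrable_const_bound[where B="R^k"]) (use bB pw in \<open>auto elim!: eventually_mono simp: power_abs\<close>)
  have eA: "(\<integral>x. \<bar>x\<bar>^n \<partial>M1) \<le> R^n" for n
  proof -
    have "(\<integral>x. \<bar>x\<bar>^n \<partial>M1) \<le> (\<integral>x. R^n \<partial>M1)"
      by (rule integral_mono_AE) (use bA pw intA in \<open>auto elim!: eventually_mono simp: power_abs[symmetric]\<close>)
    moreover have "A.prob UNIV = 1" using A.prob_space by simp
    ultimately show ?thesis by simp
  qed
  have eB: "(\<integral>x. \<bar>x\<bar>^n \<partial>M2) \<le> R^n" for n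
  proof -
    have "(\<integral>x. \<bar>x\<bar>^n \<partial>M2) \<le> (\<integral>x. R^n \<partial>M2)"
      by (rule integral_mono_AE) (use bB pw intB in \<open>auto elim!: eventually_mono simp: power_abs[symmetric]\<close>)
    moreover have "B.prob UNIV = 1" using B.prob_space by simp
    ultimately show ?thesis by simp
  qed
  have "char M1 t = char M2 t" for t
  proof -
    define S where "S n = (\<Sum>k \<le> n. ((\<i> * t)^k / fact k) * complex_of_real (\<integral>x. x^k \<partial>M1))" for n
    have S2: "S n = (\<Sum>k \<le> n. ((\<i> * t)^k / fact k) * complex_of_real (\<integral>x. x^k \<partial>M2))" for n
      unfolding S_def eq ..
    have le: "cmod (char M1 t - char M2 t) \<le> 4 * (\<bar>t\<bar>*\<bar>R\<bar>)^n / fact n" for n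
    proof -
      have 1: "cmod (char M1 t - S n) \<le> (2*\<bar>t\<bar>^n / fact n) * (\<integral>x. \<bar>x\<bar>^n \<partial>M1)"
        using A.char_approx1[of n t] intA unfolding S_def by auto
      have 2: "cmod (char M2 t - S n) \<le> (2*\<bar>t\<bar>^n / fact n) * (\<integral>x. \<bar>x\<bar>^n \<partial>M2)"
        using B.char_approx1[of n t] intB unfolding S2 by auto
      have c: "0 \<le> 2*\<bar>t\<bar>^n / fact n" by simp
      have RR: "R^n \<le> \<bar>R\<bar>^n" by (metis abs_ge_self power_abs abs_le_D1)
      have 3: "(2*\<bar>t\<bar>^n / fact n) * (\<integral>x. \<bar>x\<bar>^n \<partial>M1) \<le> (2*\<bar>t\<bar>^n / fact n) * \<bar>R\<bar>^n"
        by (rule mult_left_mono[OF order_trans[OF eA RR] c])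
      have 4: "(2*\<bar>t\<bar>^n / fact n) * (\<integral>x. \<bar>x\<bar>^n \<partial>M2) \<le> (2*\<bar>t\<bar>^n / fact n) * \<bar>R\<bar>^n"
        by (rule mult_left_mono[OF order_trans[OF eB RR] c])
      have "cmod (char M1 t - char M2 t) \<le> cmod (char M1 t - S n) + cmod (char M2 t - S n)"
        using norm_triangle_ineq4[of "char M1 t - S n" "char M2 t - S n"] by simp
      also have "\<dots> \<le> 2 * ((2*\<bar>t\<bar>^n / fact n) * \<bar>R\<bar>^n)" using 1 2 3 4 by linarith
      also have "\<dots> = 4 * (\<bar>t\<bar>*\<bar>R\<bar>)^n / fact n" by (simp add: power_mult_distrib)
      finally show ?thesis .
    qed
    have "(\<lambda>n. inverse (fact n) * (\<bar>t\<bar>*\<bar>R\<bar>)^n) \<longlonglongrightarrow> (0::real)"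
      by (rule summable_LIMSEQ_zero[OF summable_exp])
    then have "(\<lambda>n. 4 * (inverse (fact n) * (\<bar>t\<bar>*\<bar>R\<bar>)^n)) \<longlonglongrightarrow> (4 * 0::real)"
      by (intro tendsto_mult tendsto_const)
    then have lim: "(\<lambda>n. 4 * (\<bar>t\<bar>*\<bar>R\<bar>)^n / fact n) \<longlonglongrightarrow> (0::real)"
      by (simp add: field_simps)
    have "cmod (char M1 t - char M2 t) \<le> 0"
      by (rule LIMSEQ_le_const[OF lim]) (use le in auto)
    then show ?thesis by simp
  qed
  then show ?thesis by (intro Levy_uniqueness A B) auto
qed

lemma meas_borel: "sets M = sets borel \<Longrightarrow> f \<in> borel_measurable borel \<Longrightarrow> f \<in> borel_measurable M"
  using measurable_cong_sets[of M borel borel borel] by simp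

lemma real_distI: "prob_space M \<Longrightarrow> sets M = sets borel \<Longrightarrow> real_distribution M"
  by (simp add: real_distribution_def real_distribution_axioms_def)

lemma odd_moment_sym:
  fixes M :: "real measure"
  assumes s: "sets M = sets borel" and sym: "distr M borel uminus = M" and k: "odd k"
  shows "(\<integral>t. t^k \<partial>M) = 0"
proof -
  have "(\<integral>t. t^k \<partial>M) = (\<integral>t. t^k \<partial>distr M borel uminus)" using sym by simp
  also have "\<dots> = (\<integral>t. (-t)^k \<partial>M)"
    by (rule integral_distr) (auto intro: meas_borel[OF s])
  also have "\<dots> = (\<integral>t. - (t^k) \<partial>M)" using k by (simp add: power_minus_odd)
  also have "\<dots> = - (\<integral>t. t^k \<partial>M)" by simp
  finally show ?thesis by linarith
qed

lemma dist_bound: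
  fixes \<mu> :: "real measure"
  assumes s: "sets \<mu> = sets borel" and K: "compact K" and e: "emeasure \<mu> (UNIV - K) = 0"
  shows "\<exists>R. AE t in \<mu>. \<bar>t\<bar> \<le> R"
proof -
  obtain R where R: "\<forall>x\<in>K. \<bar>x\<bar> \<le> R"
    using compact_imp_bounded[OF K] unfolding bounded_real by blast
  have "UNIV - K \<in> sets \<mu>" unfolding s
    using K by (intro borel_open open_Diff compact_imp_closed) auto
  then have "UNIV - K \<in> null_sets \<mu>" using e by (simp add: null_sets_def)
  then have "AE t in \<mu>. \<bar>t\<bar> \<le> R"
    by (rule AE_I') (use R in auto)
  then show ?thesis ..
qed

lemma alt_one: "alt_word s (\<lambda>_. 1) k = s ^ k"
  by (induction k) (simp_all add: power_commutes)

lemma bern_one: "bern_rhs eta (\<lambda>_. 1) (n + n) = (eta 1) ^ n"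
  by (induction n) (simp_all add: power_commutes)

theorem lemma5p1:
  fixes E :: "'a::cstar_algebra \<Rightarrow> 'a" and Bs :: "'a set"
    and \<phi> :: "'a \<Rightarrow> complex" and B :: 'a
  assumes "op_valued_cstar_prob_space E Bs"
    and "cstate \<phi>"
    and "\<forall>x. \<phi> x = \<phi> (E x)"
    and "centered_bernoulli E Bs (\<lambda>b. E (B * b * B)) B"
  shows "(\<forall>n::nat. \<phi> (B ^ (2 * n)) = \<phi> ((E (B * 1 * B)) ^ n) \<and> \<phi> (B ^ (2 * n + 1)) = 0)
    \<and> (\<forall>\<mu>B \<mu>\<eta>. is_distribution \<phi> B \<mu>B \<longrightarrow> is_distribution \<phi> (E (B * 1 * B)) \<mu>\<eta> \<longrightarrow>
         symmetric_measure \<mu>B \<and> distr \<mu>B borel (\<lambda>t. t\<^sup>2) = \<mu>\<eta> \<and>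
         (\<forall>\<nu>. prob_space \<nu> \<and> sets \<nu> = sets borel \<and> symmetric_measure \<nu> \<and>
               distr \<nu> borel (\<lambda>t. t\<^sup>2) = \<mu>\<eta> \<longrightarrow> \<nu> = \<mu>B))"
proof -
  have one: "1 \<in> Bs" using assms(1) by (simp add: op_valued_cstar_prob_space_def unital_cstar_subalgebra_def)
  have Ek: "E (B ^ k) = (if even k then bern_rhs (\<lambda>b. E (B * b * B)) (\<lambda>_. 1) k else 0)" for k
  proof -
    have H: "\<forall>k (b::nat \<Rightarrow> 'a). (\<forall>i\<le>k. b i \<in> Bs) \<longrightarrow>
        E (alt_word B b k) = (if even k then bern_rhs (\<lambda>b. E (B * b * B)) b k else 0)"
      using assms(4) unfolding centered_bernoulli_def by blast
    then have "E (alt_word B (\<lambda>_. 1) k) = (if even k then bern_rhs (\<lambda>b. E (B * b * B)) (\<lambda>_. 1) k else 0)"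
      using spec[OF spec[OF H, of k], of "\<lambda>_. 1"] one by simp
    then show ?thesis by (simp only: alt_one)
  qed
  have phi0: "\<phi> 0 = 0"
  proof -
    have "\<phi> (0 + 0) = \<phi> 0 + \<phi> 0" using assms(2) unfolding cstate_def by blast
    then show ?thesis by simp
  qed
  have mom_even: "\<phi> (B ^ (2 * n)) = \<phi> ((E (B * 1 * B)) ^ n)" for n
  proof -
    have "\<phi> (B ^ (2 * n)) = \<phi> (E (B ^ (n + n)))" using assms(3) by (simp add: mult_2)
    also have "\<dots> = \<phi> ((E (B * 1 * B)) ^ n)" using Ek[of "n+n"] bern_one[of "\<lambda>b. E (B * b * B)" n] by simp
    finally show ?thesis .
  qed
  have mom_odd: "\<phi> (B ^ (2 * n + 1)) = 0" for n
  proof -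
    have "E (B ^ (2 * n + 1)) = 0" using Ek[of "2*n+1"] by simp
    then show ?thesis using assms(3) phi0 by metis
  qed
  have part2: "symmetric_measure \<mu>B \<and> distr \<mu>B borel (\<lambda>t. t\<^sup>2) = \<mu>\<eta> \<and>
         (\<forall>\<nu>. prob_space \<nu> \<and> sets \<nu> = sets borel \<and> symmetric_measure \<nu> \<and>
               distr \<nu> borel (\<lambda>t. t\<^sup>2) = \<mu>\<eta> \<longrightarrow> \<nu> = \<mu>B)"
    if dB: "is_distribution \<phi> B \<mu>B" and dE: "is_distribution \<phi> (E (B * 1 * B)) \<mu>\<eta>" for \<mu>B \<mu>\<eta>
  proof -
    note dB' = dB[unfolded is_distribution_def] and dE' = dE[unfolded is_distribution_def]
    have pB: "prob_space \<mu>B" and sB: "sets \<mu>B = sets borel" using dB' by auto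
    have pE: "prob_space \<mu>\<eta>" and sE: "sets \<mu>\<eta> = sets borel" using dE' by auto
    have rB: "real_distribution \<mu>B" by (rule real_distI[OF pB sB])
    have rE: "real_distribution \<mu>\<eta>" by (rule real_distI[OF pE sE])
    obtain RB where RB: "AE t in \<mu>B. \<bar>t\<bar> \<le> RB" using dB' dist_bound[OF sB] by blast
    obtain RE where RE: "AE t in \<mu>\<eta>. \<bar>t\<bar> \<le> RE" using dE' dist_bound[OF sE] by blast
    have momB: "complex_of_real (\<integral>t. t ^ k \<partial>\<mu>B) = \<phi> (B ^ k)" for k using dB' by blast
    have momE: "complex_of_real (\<integral>t. t ^ k \<partial>\<mu>\<eta>) = \<phi> ((E (B * 1 * B)) ^ k)" for k using dE' by blast
    have oddB: "(\<integral>t. t ^ k \<partial>\<mu>B) = 0" if "odd k" for k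
    proof -
      obtain n where "k = 2 * n + 1" using \<open>odd k\<close> oddE by blast
      then have "complex_of_real (\<integral>t. t ^ k \<partial>\<mu>B) = 0" using momB[of k] mom_odd[of n] by simp
      then show ?thesis by simp
    qed
    have evenB: "(\<integral>t. t ^ (2 * n) \<partial>\<mu>B) = (\<integral>t. t ^ n \<partial>\<mu>\<eta>)" for n
    proof -
      have "complex_of_real (\<integral>t. t ^ (2 * n) \<partial>\<mu>B) = complex_of_real (\<integral>t. t ^ n \<partial>\<mu>\<eta>)"
        using momB momE mom_even by simp
      then show ?thesis by (simp only: of_real_eq_iff)
    qed
    have sq_meas: "(\<lambda>t::real. t\<^sup>2) \<in> measurable M borel" if "sets M = sets borel" for M :: "real measure"
      by (rule meas_borel[OF that]) simp
    have um_meas: "(uminus::real\<Rightarrow>real) \<in> measurable M borel" if "sets M = sets borel" for M :: "real measure"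
      by (rule meas_borel[OF that]) simp
    have bset: "{x \<in> space borel. \<bar>x::real\<bar> \<le> R} \<in> sets borel" for R by measurable
    have sym: "distr \<mu>B borel uminus = \<mu>B"
    proof (rule moment_unique[where R=RB])
      show "real_distribution (distr \<mu>B borel uminus)"
        by (rule real_distI[OF prob_space.prob_space_distr[OF pB um_meas[OF sB]]]) simp
      show "real_distribution \<mu>B" by fact
      show "AE x in distr \<mu>B borel uminus. \<bar>x\<bar> \<le> RB"
        using RB by (subst AE_distr_iff[OF um_meas[OF sB] bset]) simp
      show "AE x in \<mu>B. \<bar>x\<bar> \<le> RB" by fact
      fix k :: nat
      have "(\<integral>x. x^k \<partial>distr \<mu>B borel uminus) = (\<integral>x. (-x)^k \<partial>\<mu>B)"
        by (rule integral_distr[OF um_meas[OF sB]]) simp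
      also have "\<dots> = (\<integral>x. x^k \<partial>\<mu>B)"
      proof (cases "even k")
        case True then show ?thesis by (simp add: power_minus_even)
      next
        case False then show ?thesis using oddB[of k] by (simp add: power_minus_odd)
      qed
      finally show "(\<integral>x. x^k \<partial>distr \<mu>B borel uminus) = (\<integral>x. x^k \<partial>\<mu>B)" .
    qed
    have pw: "\<bar>x\<bar> \<le> R \<Longrightarrow> \<bar>x\<bar>^k \<le> R^k" for x R :: real and k::nat
      by (rule power_mono) auto
    have push: "distr \<mu>B borel (\<lambda>t. t\<^sup>2) = \<mu>\<eta>"
    proof (rule moment_unique[where R="max (RB\<^sup>2) RE"])
      show "real_distribution (distr \<mu>B borel (\<lambda>t. t\<^sup>2))"
        by (rule real_distI[OF prob_space.prob_space_distr[OF pB sq_meas[OF sB]]]) simp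
      show "real_distribution \<mu>\<eta>" by fact
      show "AE x in distr \<mu>B borel (\<lambda>t. t\<^sup>2). \<bar>x\<bar> \<le> max (RB\<^sup>2) RE"
        apply (subst AE_distr_iff[OF sq_meas[OF sB] bset])
        using RB by (auto elim!: eventually_mono dest: pw[where k=2] simp: power_abs[symmetric])
      show "AE x in \<mu>\<eta>. \<bar>x\<bar> \<le> max (RB\<^sup>2) RE"
        using RE by (auto elim!: eventually_mono)
      fix k :: nat
      have "(\<integral>x. x^k \<partial>distr \<mu>B borel (\<lambda>t. t\<^sup>2)) = (\<integral>x. (x\<^sup>2)^k \<partial>\<mu>B)"
        by (rule integral_distr[OF sq_meas[OF sB]]) simp
      also have "\<dots> = (\<integral>x. x^(2*k) \<partial>\<mu>B)" by (simp add: power_mult)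
      also have "\<dots> = (\<integral>x. x^k \<partial>\<mu>\<eta>)" by (rule evenB)
      finally show "(\<integral>x. x^k \<partial>distr \<mu>B borel (\<lambda>t. t\<^sup>2)) = (\<integral>x. x^k \<partial>\<mu>\<eta>)" .
    qed
    have uniq: "\<nu> = \<mu>B" if pn: "prob_space \<nu>" and sn: "sets \<nu> = sets borel"
      and symn: "symmetric_measure \<nu>" and pushn: "distr \<nu> borel (\<lambda>t. t\<^sup>2) = \<mu>\<eta>" for \<nu>
    proof (rule moment_unique[where R="max (sqrt RE) RB"])
      show "real_distribution \<nu>" by (rule real_distI[OF pn sn])
      show "real_distribution \<mu>B" by fact
      have "AE x in distr \<nu> borel (\<lambda>t. t\<^sup>2). \<bar>x\<bar> \<le> RE" unfolding pushn by (rule RE)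
      then have "AE x in \<nu>. \<bar>x\<^sup>2\<bar> \<le> RE"
        by (subst (asm) AE_distr_iff[OF sq_meas[OF sn] bset])
      then show "AE x in \<nu>. \<bar>x\<bar> \<le> max (sqrt RE) RB"
      proof (rule eventually_mono)
        fix x :: real assume "\<bar>x\<^sup>2\<bar> \<le> RE"
        then have "sqrt (x\<^sup>2) \<le> sqrt RE" by (intro real_sqrt_le_mono) simp
        then show "\<bar>x\<bar> \<le> max (sqrt RE) RB" by simp
      qed
      show "AE x in \<mu>B. \<bar>x\<bar> \<le> max (sqrt RE) RB" using RB by (auto elim!: eventually_mono)
      fix k :: nat
      show "(\<integral>x. x^k \<partial>\<nu>) = (\<integral>x. x^k \<partial>\<mu>B)"
      proof (cases "even k")
        case True
        then obtain n where k: "k = 2 * n" by blast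
        have "(\<integral>x. x^k \<partial>\<nu>) = (\<integral>x. (x\<^sup>2)^n \<partial>\<nu>)" by (simp add: k power_mult)
        also have "\<dots> = (\<integral>x. x^n \<partial>distr \<nu> borel (\<lambda>t. t\<^sup>2))"
          by (rule integral_distr[OF sq_meas[OF sn], symmetric]) simp
        also have "\<dots> = (\<integral>x. x^k \<partial>\<mu>B)" using pushn evenB k by simp
        finally show ?thesis .
      next
        case False
        then show ?thesis using odd_moment_sym[OF sn _ False] symn oddB[OF False]
          by (simp add: symmetric_measure_def)
      qed
    qed
    show ?thesis using sym push uniq by (auto simp: symmetric_measure_def)
  qed
  show ?thesis using mom_even mom_odd part2 by blast
qed

end
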